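(* For every $k,\ell\ge1$, $\mathsf{RT}^2_{k,\ell}\le_c\mathsf{DT}^2_{2k,2\ell+1}$.
   Context: $\mathsf{RT}^2_{k,\ell}$: instances are colorings $f:[\mathbb N]^2\to k$; solutions are infinite sets $H\subseteq\mathbb N$ with $|f([H]^2)|\le\ell$. $\mathsf{DT}^2_{k,\ell}$: instances are colorings $f:[\mathbb Q]^2\to k$ (with $\mathbb Q$ computably presented); solutions are sets $S\subseteq\mathbb Q$ such that $(S,<)$ is a dense linear order without endpoints and $|f([S]^2)|\le\ell$. Computable reducibility: a problem $\mathsf Q$ is computably reducible to $\mathsf P$, written $\mathsf Q\le_c\mathsf P$, if every $\mathsf Q$-instance $X$ computes a $\mathsf P$-instance $\widehat X$ such that for every $\mathsf P$-solution $\widehat Y$ to $\widehat X$, $X\oplus\widehat Y$ computes a $\mathsf Q$-solution to $X$. *)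

theory Defs
  imports Complex_Main "HOL-Library.Nat_Bijection"
begin

inductive rec_in :: "nat set \<Rightarrow> nat \<Rightarrow> (nat list \<Rightarrow> nat) \<Rightarrow> bool" for A :: "nat set" where
  zero: "rec_in A n (\<lambda>_. 0)"
| succ: "rec_in A 1 (\<lambda>xs. Suc (hd xs))"
| proj: "i < n \<Longrightarrow> rec_in A n (\<lambda>xs. xs ! i)"
| charfun: "rec_in A 1 (\<lambda>xs. if hd xs \<in> A then 1 else 0)"
| comp: "rec_in A m g \<Longrightarrow> length gs = m \<Longrightarrow> (\<forall>h \<in> set gs. rec_in A n h)
          \<Longrightarrow> rec_in A n (\<lambda>xs. g (map (\<lambda>h. h xs) gs))"
| prim: "rec_in A n g \<Longrightarrow> rec_in A (n + 2) h
          \<Longrightarrow> rec_in A (n + 1) (\<lambda>xs. rec_nat (g (tl xs)) (\<lambda>j r. h (j # r # tl xs)) (hd xs))"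
| mu: "rec_in A (n + 1) g \<Longrightarrow> (\<forall>xs. length xs = n \<longrightarrow> (\<exists>y. g (y # xs) = 0))
          \<Longrightarrow> rec_in A n (\<lambda>xs. LEAST y. g (y # xs) = 0)"

definition turing_le :: "nat set \<Rightarrow> nat set \<Rightarrow> bool" where
  "turing_le B A \<longleftrightarrow> (\<exists>f. rec_in A 1 f \<and> (\<forall>x. f [x] = (if x \<in> B then 1 else 0)))"

definition join :: "nat set \<Rightarrow> nat set \<Rightarrow> nat set" where
  "join X Y = {2 * n | n. n \<in> X} \<union> {2 * n + 1 | n. n \<in> Y}"

text \<open>A problem is given by an instance predicate, a solution relation, and
  codings of instances and solutions as subsets of nat.\<close>
definition comp_reducible ::
  "('a \<Rightarrow> bool) \<Rightarrow> ('a \<Rightarrow> 'b \<Rightarrow> bool) \<Rightarrow> ('a \<Rightarrow> nat set) \<Rightarrow> ('b \<Rightarrow> nat set)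
   \<Rightarrow> ('c \<Rightarrow> bool) \<Rightarrow> ('c \<Rightarrow> 'd \<Rightarrow> bool) \<Rightarrow> ('c \<Rightarrow> nat set) \<Rightarrow> ('d \<Rightarrow> nat set) \<Rightarrow> bool" where
  "comp_reducible QI QS Qic Qsc PI PS Pic Psc \<longleftrightarrow>
     (\<forall>X. QI X \<longrightarrow> (\<exists>Xh. PI Xh \<and> turing_le (Pic Xh) (Qic X) \<and>
        (\<forall>Yh. PS Xh Yh \<longrightarrow> (\<exists>Y. QS X Y \<and> turing_le (Qsc Y) (join (Qic X) (Psc Yh))))))"

text \<open>A coloring f : [N]^2 \<rightarrow> k is a function on pairs x < y with values < k
  (values on other arguments are irrelevant).\<close>
definition RT_inst :: "nat \<Rightarrow> (nat \<Rightarrow> nat \<Rightarrow> nat) \<Rightarrow> bool" where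
  "RT_inst k f \<longleftrightarrow> (\<forall>x y. x < y \<longrightarrow> f x y < k)"

definition RT_sol :: "nat \<Rightarrow> (nat \<Rightarrow> nat \<Rightarrow> nat) \<Rightarrow> nat set \<Rightarrow> bool" where
  "RT_sol l f H \<longleftrightarrow> infinite H \<and>
     finite {f x y | x y. x \<in> H \<and> y \<in> H \<and> x < y} \<and>
     card {f x y | x y. x \<in> H \<and> y \<in> H \<and> x < y} \<le> l"

definition RT_code :: "(nat \<Rightarrow> nat \<Rightarrow> nat) \<Rightarrow> nat set" where
  "RT_code f = {prod_encode (prod_encode (x, y), f x y) | x y. x < y}"

definition rat_of_code :: "nat \<Rightarrow> rat" where
  "rat_of_code n = (case prod_decode n of (a, b) \<Rightarrow> Fract (int_decode a) (int b + 1))"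

definition DT_inst :: "nat \<Rightarrow> (rat \<Rightarrow> rat \<Rightarrow> nat) \<Rightarrow> bool" where
  "DT_inst k c \<longleftrightarrow> (\<forall>x y. x < y \<longrightarrow> c x y < k)"

definition DT_sol :: "nat \<Rightarrow> (rat \<Rightarrow> rat \<Rightarrow> nat) \<Rightarrow> rat set \<Rightarrow> bool" where
  "DT_sol l c S \<longleftrightarrow> S \<noteq> {} \<and>
     (\<forall>x\<in>S. \<forall>y\<in>S. x < y \<longrightarrow> (\<exists>z\<in>S. x < z \<and> z < y)) \<and>
     (\<forall>x\<in>S. \<exists>y\<in>S. y < x) \<and> (\<forall>x\<in>S. \<exists>y\<in>S. x < y) \<and>
     finite {c x y | x y. x \<in> S \<and> y \<in> S \<and> x < y} \<and>
     card {c x y | x y. x \<in> S \<and> y \<in> S \<and> x < y} \<le> l"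

definition DT_code :: "(rat \<Rightarrow> rat \<Rightarrow> nat) \<Rightarrow> nat set" where
  "DT_code c = {prod_encode (prod_encode (m, n), c (rat_of_code m) (rat_of_code n)) | m n.
                  rat_of_code m < rat_of_code n}"

definition DT_sol_code :: "rat set \<Rightarrow> nat set" where
  "DT_sol_code S = {n. rat_of_code n \<in> S}"

end

theory Submission
  imports Defs "HOL-Library.Infinite_Set"
begin

definition rc :: "nat set \<Rightarrow> nat \<Rightarrow> (nat list \<Rightarrow> nat) \<Rightarrow> bool" where
  "rc A n F \<longleftrightarrow> (\<exists>g. rec_in A n g \<and> (\<forall>xs. length xs = n \<longrightarrow> g xs = F xs))"

definition rcp :: "nat set \<Rightarrow> nat \<Rightarrow> (nat list \<Rightarrow> bool) \<Rightarrow> bool" where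
  "rcp A n P \<longleftrightarrow> rc A n (\<lambda>xs. if P xs then 1 else 0)"

lemma rc_cong: "rc A n F \<Longrightarrow> (\<And>xs. length xs = n \<Longrightarrow> F xs = G xs) \<Longrightarrow> rc A n G"
  unfolding rc_def by metis

lemma rc_cong': "rc A m F \<Longrightarrow> m = n \<Longrightarrow> (\<And>xs. length xs = n \<Longrightarrow> F xs = G xs) \<Longrightarrow> rc A n G"
  using rc_cong by blast

lemma rcp_cong: "rcp A n P \<Longrightarrow> (\<And>xs. length xs = n \<Longrightarrow> P xs = Q xs) \<Longrightarrow> rcp A n Q"
  unfolding rcp_def by (erule rc_cong) simp

lemma hd_len[simp]: "length xs = Suc n \<Longrightarrow> hd xs = xs ! 0"
  by (cases xs) auto

lemma rc_I: "rec_in A n g \<Longrightarrow> rc A n g"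
  unfolding rc_def by blast

lemma rc_zero: "rc A n (\<lambda>_. 0)"
  by (rule rc_I) (rule rec_in.zero)

lemma rc_nth: "i < n \<Longrightarrow> rc A n (\<lambda>xs. xs ! i)"
  by (rule rc_I) (rule rec_in.proj)

lemma rc_comp_list:
  assumes "rc A m G" "length Hs = m" "\<forall>h\<in>set Hs. rc A n h"
  shows "rc A n (\<lambda>xs. G (map (\<lambda>h. h xs) Hs))"
proof -
  have "\<exists>gs. length gs = length Hs \<and> (\<forall>g\<in>set gs. rec_in A n g) \<and>
        (\<forall>xs. length xs = n \<longrightarrow> map (\<lambda>h. h xs) gs = map (\<lambda>h. h xs) Hs)"
    using assms(3)
  proof (induction Hs)
    case Nil
    then show ?case by auto
  next
    case (Cons h Hs)
    then obtain gs where gs: "length gs = length Hs" "\<forall>g\<in>set gs. rec_in A n g"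
        "\<forall>xs. length xs = n \<longrightarrow> map (\<lambda>h. h xs) gs = map (\<lambda>h. h xs) Hs" by auto
    from Cons.prems obtain g where g: "rec_in A n g" "\<forall>xs. length xs = n \<longrightarrow> g xs = h xs"
      unfolding rc_def by auto
    show ?case by (rule exI[of _ "g # gs"]) (use gs g in auto)
  qed
  then obtain gs where gs: "length gs = m" "\<forall>g\<in>set gs. rec_in A n g"
        "\<forall>xs. length xs = n \<longrightarrow> map (\<lambda>h. h xs) gs = map (\<lambda>h. h xs) Hs" using assms(2) by auto
  from assms(1) obtain g where g: "rec_in A m g" "\<forall>xs. length xs = m \<longrightarrow> g xs = G xs"
    unfolding rc_def by auto
  have "rec_in A n (\<lambda>xs. g (map (\<lambda>h. h xs) gs))"
    by (rule rec_in.comp[OF g(1) gs(1) gs(2)])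
  moreover have "\<forall>xs. length xs = n \<longrightarrow> g (map (\<lambda>h. h xs) gs) = G (map (\<lambda>h. h xs) Hs)"
    using gs g assms(2) by (metis length_map)
  ultimately show ?thesis unfolding rc_def by blast
qed

lemma rc_comp1: "rc A 1 G \<Longrightarrow> rc A n F \<Longrightarrow> rc A n (\<lambda>xs. G [F xs])"
  using rc_comp_list[of A 1 G "[F]" n] by simp

lemma rc_comp2: "rc A 2 G \<Longrightarrow> rc A n F1 \<Longrightarrow> rc A n F2 \<Longrightarrow> rc A n (\<lambda>xs. G [F1 xs, F2 xs])"
  using rc_comp_list[of A 2 G "[F1, F2]" n] by simp

lemma rc_comp3: "rc A 3 G \<Longrightarrow> rc A n F1 \<Longrightarrow> rc A n F2 \<Longrightarrow> rc A n F3 \<Longrightarrow>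
   rc A n (\<lambda>xs. G [F1 xs, F2 xs, F3 xs])"
  using rc_comp_list[of A 3 G "[F1, F2, F3]" n] by (simp add: numeral_3_eq_3)

lemma rc_prim:
  assumes "rc A n G" "rc A (n + 2) H"
  shows "rc A (n + 1) (\<lambda>xs. rec_nat (G (tl xs)) (\<lambda>j r. H (j # r # tl xs)) (hd xs))"
proof -
  from assms(1) obtain g where g: "rec_in A n g" "\<forall>xs. length xs = n \<longrightarrow> g xs = G xs"
    unfolding rc_def by auto
  from assms(2) obtain h where h: "rec_in A (n+2) h" "\<forall>xs. length xs = n+2 \<longrightarrow> h xs = H xs"
    unfolding rc_def by auto
  have "rec_in A (n + 1) (\<lambda>xs. rec_nat (g (tl xs)) (\<lambda>j r. h (j # r # tl xs)) (hd xs))"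
    by (rule rec_in.prim[OF g(1) h(1)])
  moreover have "rec_nat (g (tl xs)) (\<lambda>j r. h (j # r # tl xs)) y
       = rec_nat (G (tl xs)) (\<lambda>j r. H (j # r # tl xs)) y" if "length xs = n + 1" for xs y
    using that g h by (induction y) auto
  ultimately show ?thesis unfolding rc_def by blast
qed

lemma rc_mu:
  assumes "rc A (n + 1) G" "\<forall>xs. length xs = n \<longrightarrow> (\<exists>y. G (y # xs) = 0)"
  shows "rc A n (\<lambda>xs. LEAST y. G (y # xs) = 0)"
proof -
  from assms(1) obtain g where g: "rec_in A (n+1) g" "\<forall>xs. length xs = n+1 \<longrightarrow> g xs = G xs"
    unfolding rc_def by auto
  have eq: "g (y # xs) = G (y # xs)" if "length xs = n" for xs y using g(2) that by simp
  have "rec_in A n (\<lambda>xs. LEAST y. g (y # xs) = 0)"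
    by (rule rec_in.mu[OF g(1)]) (use assms(2) eq in auto)
  moreover have "\<forall>xs. length xs = n \<longrightarrow> (LEAST y. g (y # xs) = 0) = (LEAST y. G (y # xs) = 0)"
    using eq by simp
  ultimately show ?thesis unfolding rc_def by blast
qed

lemma rc_const0: "rc A n (\<lambda>_. c)"
proof (induction c)
  case 0
  then show ?case by (rule rc_zero)
next
  case (Suc c)
  have "rc A 1 (\<lambda>xs. Suc (hd xs))" by (rule rc_I) (rule rec_in.succ)
  from rc_comp1[OF this Suc] show ?case by simp
qed

lemma rc_Suc_base: "rc A 1 (\<lambda>xs. Suc (xs ! 0))"
  by (rule rc_cong[OF rc_I[OF rec_in.succ]]) (metis hd_conv_nth list.size(3) zero_neq_one)

lemma rc_char_base: "rc A 1 (\<lambda>xs. if xs ! 0 \<in> A then 1 else 0)"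
  by (rule rc_cong[OF rc_I[OF rec_in.charfun]]) (metis hd_conv_nth list.size(3) zero_neq_one)

lemma rc_prim0:
  assumes "rc A 2 (\<lambda>xs. h (xs ! 0) (xs ! 1))"
  shows "rc A 1 (\<lambda>xs. rec_nat c (\<lambda>j r. h j r) (xs ! 0))"
proof -
  have "rc A (0 + 1) (\<lambda>xs. rec_nat ((\<lambda>_. c) (tl xs)) (\<lambda>j r. (\<lambda>xs. h (xs ! 0) (xs ! 1)) (j # r # tl xs)) (hd xs))"
    by (rule rc_prim[OF rc_const0]) (use assms in \<open>simp add: numeral_2_eq_2\<close>)
  then show ?thesis by (rule rc_cong') (auto simp: hd_conv_nth)
qed

lemma rc_prim1:
  assumes "rc A 1 (\<lambda>xs. g (xs ! 0))" "rc A 3 (\<lambda>xs. h (xs ! 0) (xs ! 1) (xs ! 2))"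
  shows "rc A 2 (\<lambda>xs. rec_nat (g (xs ! 1)) (\<lambda>j r. h j r (xs ! 1)) (xs ! 0))"
proof -
  have "rc A (1 + 1) (\<lambda>xs. rec_nat ((\<lambda>xs. g (xs ! 0)) (tl xs)) (\<lambda>j r. (\<lambda>xs. h (xs ! 0) (xs ! 1) (xs ! 2)) (j # r # tl xs)) (hd xs))"
    by (rule rc_prim) (use assms in \<open>simp_all add: numeral_2_eq_2 numeral_3_eq_3\<close>)
  then show ?thesis
    by (rule rc_cong') (auto simp: hd_conv_nth nth_tl numeral_2_eq_2)
qed

lemma rc_lift1: "rc A 1 (\<lambda>xs. \<phi> (xs ! 0)) \<Longrightarrow> rc A n F \<Longrightarrow> rc A n (\<lambda>xs. \<phi> (F xs))"
  by (drule (1) rc_comp1) simp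

lemma rc_lift2: "rc A 2 (\<lambda>xs. \<phi> (xs ! 0) (xs ! 1)) \<Longrightarrow> rc A n F \<Longrightarrow> rc A n G \<Longrightarrow>
   rc A n (\<lambda>xs. \<phi> (F xs) (G xs))"
  by (drule (2) rc_comp2) simp

lemma rcp_lift1: "rcp A 1 (\<lambda>xs. \<phi> (xs ! 0)) \<Longrightarrow> rc A n F \<Longrightarrow> rcp A n (\<lambda>xs. \<phi> (F xs))"
  unfolding rcp_def by (drule (1) rc_comp1) simp

lemma rcp_lift2: "rcp A 2 (\<lambda>xs. \<phi> (xs ! 0) (xs ! 1)) \<Longrightarrow> rc A n F \<Longrightarrow> rc A n G \<Longrightarrow>
   rcp A n (\<lambda>xs. \<phi> (F xs) (G xs))"
  unfolding rcp_def by (drule (2) rc_comp2) simp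

lemma rc_const: "rc A n (\<lambda>xs. c)"
  by (rule rc_const0)

lemma rc_Suc: "rc A n F \<Longrightarrow> rc A n (\<lambda>xs. Suc (F xs))"
  by (rule rc_lift1[OF rc_Suc_base])

lemma rec_nat_add: "rec_nat a (\<lambda>j r. Suc r) b = a + b"
  by (induction b) auto

lemma rc_add: "rc A n F \<Longrightarrow> rc A n G \<Longrightarrow> rc A n (\<lambda>xs. F xs + G xs)"
proof -
  have "rc A 3 (\<lambda>xs. Suc (xs ! 1))" by (rule rc_Suc) (rule rc_nth, simp)
  then have "rc A 2 (\<lambda>xs. rec_nat (xs ! 1) (\<lambda>j r. Suc r) (xs ! 0))"
    using rc_prim1[of A "\<lambda>x. x" "\<lambda>j r x. Suc r"] rc_nth[of 0 1 A] by simp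
  then have "rc A 2 (\<lambda>xs. xs ! 0 + xs ! 1)"
    by (rule rc_cong) (simp add: rec_nat_add)
  then show "rc A n F \<Longrightarrow> rc A n G \<Longrightarrow> rc A n (\<lambda>xs. F xs + G xs)"
    by (rule rc_lift2)
qed

lemma rec_nat_mult: "rec_nat 0 (\<lambda>j r. r + a) b = b * a"
  by (induction b) auto

lemma rc_mult: "rc A n F \<Longrightarrow> rc A n G \<Longrightarrow> rc A n (\<lambda>xs. F xs * G xs)"
proof -
  have "rc A 3 (\<lambda>xs. xs ! 1 + xs ! 2)" by (intro rc_add rc_nth) auto
  then have "rc A 2 (\<lambda>xs. rec_nat 0 (\<lambda>j r. r + xs ! 1) (xs ! 0))"
    using rc_prim1[of A "\<lambda>x. 0" "\<lambda>j r x. r + x"] rc_const[of A 1 0] by simp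
  then have "rc A 2 (\<lambda>xs. xs ! 0 * xs ! 1)"
    by (rule rc_cong) (simp add: rec_nat_mult)
  then show "rc A n F \<Longrightarrow> rc A n G \<Longrightarrow> rc A n (\<lambda>xs. F xs * G xs)"
    by (rule rc_lift2)
qed

lemma rec_nat_pred: "rec_nat 0 (\<lambda>j r. j) b = b - 1"
  by (induction b) auto

lemma rc_pred: "rc A n F \<Longrightarrow> rc A n (\<lambda>xs. F xs - 1)"
proof -
  have "rc A 1 (\<lambda>xs. rec_nat 0 (\<lambda>j r. j) (xs ! 0))"
    using rc_prim0[of A "\<lambda>j r. j" 0] rc_nth[of 0 2 A] by simp
  then have "rc A 1 (\<lambda>xs. xs ! 0 - 1)"
    by (rule rc_cong) (simp add: rec_nat_pred)
  then show "rc A n F \<Longrightarrow> rc A n (\<lambda>xs. F xs - 1)"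
    by (rule rc_lift1)
qed

lemma rec_nat_monus: "rec_nat a (\<lambda>j r. r - Suc 0) b = a - b"
  by (induction b) auto

lemma rc_diff: "rc A n F \<Longrightarrow> rc A n G \<Longrightarrow> rc A n (\<lambda>xs. F xs - G xs)"
proof -
  have "rc A 3 (\<lambda>xs. xs ! 1 - 1)" by (intro rc_pred rc_nth) auto
  then have "rc A 2 (\<lambda>xs. rec_nat (xs ! 1) (\<lambda>j r. r - 1) (xs ! 0))"
    using rc_prim1[of A "\<lambda>x. x" "\<lambda>j r x. r - 1"] rc_nth[of 0 1 A] by simp
  then have "rc A 2 (\<lambda>xs. xs ! 1 - xs ! 0)"
    by (rule rc_cong) (simp add: rec_nat_monus)
  then have "rc A n G \<Longrightarrow> rc A n F \<Longrightarrow> rc A n (\<lambda>xs. F xs - G xs)"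
    by (rule rc_lift2)
  then show "rc A n F \<Longrightarrow> rc A n G \<Longrightarrow> rc A n (\<lambda>xs. F xs - G xs)" by blast
qed

lemma rc_rcp: "rcp A n P \<Longrightarrow> rc A n (\<lambda>xs. if P xs then 1 else 0)"
  by (simp add: rcp_def)

lemma rcp_less: "rc A n F \<Longrightarrow> rc A n G \<Longrightarrow> rcp A n (\<lambda>xs. F xs < G xs)"
  unfolding rcp_def
  by (rule rc_cong[where F="\<lambda>xs. 1 - (1 - (G xs - F xs))"]) (intro rc_diff rc_const, auto)

lemma rcp_not: "rcp A n P \<Longrightarrow> rcp A n (\<lambda>xs. \<not> P xs)"
  unfolding rcp_def
  by (rule rc_cong[where F="\<lambda>xs. 1 - (if P xs then 1 else 0)"]) (intro rc_diff rc_const, auto)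

lemma rcp_and: "rcp A n P \<Longrightarrow> rcp A n Q \<Longrightarrow> rcp A n (\<lambda>xs. P xs \<and> Q xs)"
  unfolding rcp_def
  by (rule rc_cong[where F="\<lambda>xs. (if P xs then 1 else 0) * (if Q xs then 1 else 0)"]) (intro rc_mult, auto)

lemma rcp_or: "rcp A n P \<Longrightarrow> rcp A n Q \<Longrightarrow> rcp A n (\<lambda>xs. P xs \<or> Q xs)"
  by (rule rcp_cong[where P="\<lambda>xs. \<not> (\<not> P xs \<and> \<not> Q xs)"]) (intro rcp_not rcp_and, auto)

lemma rcp_imp: "rcp A n P \<Longrightarrow> rcp A n Q \<Longrightarrow> rcp A n (\<lambda>xs. P xs \<longrightarrow> Q xs)"
  by (rule rcp_cong[where P="\<lambda>xs. \<not> P xs \<or> Q xs"]) (intro rcp_not rcp_or, auto)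

lemma rcp_le: "rc A n F \<Longrightarrow> rc A n G \<Longrightarrow> rcp A n (\<lambda>xs. F xs \<le> G xs)"
  by (rule rcp_cong[where P="\<lambda>xs. \<not> G xs < F xs"]) (intro rcp_not rcp_less, auto)

lemma rcp_eq: "rc A n F \<Longrightarrow> rc A n G \<Longrightarrow> rcp A n (\<lambda>xs. F xs = G xs)"
  by (rule rcp_cong[where P="\<lambda>xs. F xs \<le> G xs \<and> G xs \<le> F xs"]) (intro rcp_and rcp_le, auto)

lemma rcp_const: "rcp A n (\<lambda>xs. b)"
  unfolding rcp_def by (rule rc_const)

lemma rc_if: "rcp A n P \<Longrightarrow> rc A n F \<Longrightarrow> rc A n G \<Longrightarrow> rc A n (\<lambda>xs. if P xs then F xs else G xs)"
  unfolding rcp_def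
  by (rule rc_cong[where F="\<lambda>xs. (if P xs then 1 else 0) * F xs + (1 - (if P xs then 1 else 0)) * G xs"])
     (intro rc_add rc_mult rc_diff rc_const, auto)

lemma rcp_mem: "rc A n F \<Longrightarrow> rcp A n (\<lambda>xs. F xs \<in> A)"
  unfolding rcp_def by (rule rc_lift1[OF rc_char_base])

lemma rc_Least:
  assumes "rcp A (Suc n) P" "\<And>xs. length xs = n \<Longrightarrow> \<exists>y. P (y # xs)"
  shows "rc A n (\<lambda>xs. LEAST y. P (y # xs))"
proof -
  have G: "rc A (n + 1) (\<lambda>xs. 1 - (if P xs then 1 else 0))"
    using assms(1) unfolding rcp_def by (auto intro: rc_diff rc_const)
  have "rc A n (\<lambda>xs. LEAST y. 1 - (if P (y # xs) then 1 else 0) = (0::nat))"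
    by (rule rc_mu[OF G]) (use assms(2) in auto)
  moreover have "(LEAST y. 1 - (if P (y # xs) then 1 else 0) = (0::nat)) = (LEAST y. P (y # xs))" for xs
    by (rule arg_cong[where f=Least]) auto
  ultimately show ?thesis by simp
qed

lemma turing_leI: "rcp A 1 (\<lambda>xs. xs ! 0 \<in> B) \<Longrightarrow> turing_le B A"
  unfolding turing_le_def rcp_def rc_def by force

lemmas rc_intros = rc_add rc_mult rc_diff rc_Suc rc_const rc_nth rc_if rc_rcp
  rcp_less rcp_le rcp_eq rcp_not rcp_and rcp_or rcp_imp rcp_mem

section \<open>Coding functions\<close>

lemma half_Least: "(LEAST h. x < Suc (Suc (2 * h))) = x div (2::nat)"
  by (rule Least_equality) auto

lemma rc_half: "rc A n F \<Longrightarrow> rc A n (\<lambda>xs. F xs div 2)"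
proof -
  have "rc A 1 (\<lambda>xs. LEAST h. (h # xs) ! 1 < 2 * (h # xs) ! 0 + 2)"
  proof (rule rc_Least)
    show "rcp A (Suc 1) (\<lambda>xs. xs ! 1 < 2 * xs ! 0 + 2)"
      by (intro rc_intros) auto
    show "\<exists>h. (h # xs) ! 1 < 2 * (h # xs) ! 0 + 2" for xs :: "nat list"
      by (rule exI[of _ "xs ! 0"]) simp
  qed
  then have "rc A 1 (\<lambda>xs. xs ! 0 div 2)"
    by (rule rc_cong) (simp add: half_Least)
  then show "rc A n F \<Longrightarrow> rc A n (\<lambda>xs. F xs div 2)" by (rule rc_lift1)
qed

lemma even_half: "even (x::nat) = (x = 2 * (x div 2))"
  by presburger

lemma rcp_even: "rc A n F \<Longrightarrow> rcp A n (\<lambda>xs. even (F xs))"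
  by (rule rcp_cong[where P="\<lambda>xs. F xs = 2 * (F xs div 2)"]) (intro rc_intros rc_half, auto simp: even_half[symmetric])

lemma rec_nat_tri: "rec_nat 0 (\<lambda>j r. Suc (r + j)) b = triangle b"
  by (induction b) auto

lemma rc_tri: "rc A n F \<Longrightarrow> rc A n (\<lambda>xs. triangle (F xs))"
proof -
  have "rc A 2 (\<lambda>xs. xs ! 1 + Suc (xs ! 0))" by (intro rc_intros) auto
  then have "rc A 1 (\<lambda>xs. rec_nat 0 (\<lambda>j r. r + Suc j) (xs ! 0))"
    using rc_prim0[of A "\<lambda>j r. r + Suc j" 0] by simp
  then have "rc A 1 (\<lambda>xs. triangle (xs ! 0))"
    by (rule rc_cong) (simp add: rec_nat_tri)
  then show "rc A n F \<Longrightarrow> rc A n (\<lambda>xs. triangle (F xs))" by (rule rc_lift1)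
qed

lemma rc_penc: "rc A n F \<Longrightarrow> rc A n G \<Longrightarrow> rc A n (\<lambda>xs. prod_encode (F xs, G xs))"
  by (rule rc_cong[where F="\<lambda>xs. triangle (F xs + G xs) + F xs"]) (intro rc_intros rc_tri, auto simp: prod_encode_def)

definition diag :: "nat \<Rightarrow> nat" where "diag x = (LEAST s. x < triangle (Suc s))"

lemma triangle_ge: "n \<le> triangle n"
  by (induction n) auto

lemma pd_formula: "prod_decode x = (x - triangle (diag x), diag x - (x - triangle (diag x)))"
proof -
  define s where "s = diag x"
  have ex: "x < triangle (Suc x)" using triangle_ge[of "Suc x"] by simp
  have 1: "x < triangle (Suc s)" unfolding s_def diag_def by (rule LeastI[of _ x]) (rule ex)
  have 2: "triangle s \<le> x"
  proof (cases s)
    case 0 then show ?thesis by simp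
  next
    case (Suc t)
    have "\<not> x < triangle (Suc t)" using not_less_Least[of t "\<lambda>s. x < triangle (Suc s)"] Suc
      unfolding s_def diag_def by simp
    then show ?thesis using Suc by simp
  qed
  define a where "a = x - triangle s"
  have as: "a \<le> s" using 1 2 unfolding a_def by simp
  have "prod_encode (a, s - a) = x" using as 2 unfolding a_def prod_encode_def by simp
  then have "prod_decode x = (a, s - a)" by (metis prod_encode_inverse)
  then show ?thesis unfolding a_def s_def .
qed

lemma rc_diag: "rc A n F \<Longrightarrow> rc A n (\<lambda>xs. diag (F xs))"
proof -
  have "rc A 1 (\<lambda>xs. LEAST s. (s # xs) ! 1 < triangle (Suc ((s # xs) ! 0)))"
  proof (rule rc_Least)
    show "rcp A (Suc 1) (\<lambda>xs. xs ! 1 < triangle (Suc (xs ! 0)))"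
      by (intro rc_intros rc_tri) auto
    show "\<exists>y. (y # xs) ! 1 < triangle (Suc ((y # xs) ! 0))" for xs
      by (rule exI[of _ "xs ! 0"]) (use triangle_ge[of "xs ! 0"] in simp)
  qed
  then have "rc A 1 (\<lambda>xs. diag (xs ! 0))"
    by (rule rc_cong) (simp add: diag_def)
  then show "rc A n F \<Longrightarrow> rc A n (\<lambda>xs. diag (F xs))" by (rule rc_lift1)
qed

lemma rc_pfst: "rc A n F \<Longrightarrow> rc A n (\<lambda>xs. fst (prod_decode (F xs)))"
  by (rule rc_cong[where F="\<lambda>xs. F xs - triangle (diag (F xs))"])
     (intro rc_intros rc_tri rc_diag, auto simp: pd_formula)

lemma rc_psnd: "rc A n F \<Longrightarrow> rc A n (\<lambda>xs. snd (prod_decode (F xs)))"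
  by (rule rc_cong[where F="\<lambda>xs. diag (F xs) - (F xs - triangle (diag (F xs)))"])
     (intro rc_intros rc_tri rc_diag, auto simp: pd_formula)

section \<open>Rationals\<close>

definition ip :: "nat \<Rightarrow> nat" where "ip a = (if even a then a div 2 else 0)"
definition inn :: "nat \<Rightarrow> nat" where "inn a = (if even a then 0 else a div 2 + 1)"

lemma int_decode_ip: "int_decode a = int (ip a) - int (inn a)"
  by (simp add: int_decode_def sum_decode_def ip_def inn_def)

lemma rat_code: "rat_of_code m = Fract (int (ip (fst (prod_decode m))) - int (inn (fst (prod_decode m))))
   (int (snd (prod_decode m)) + 1)"
  by (simp add: rat_of_code_def case_prod_beta int_decode_ip)

lemma frac_less: "(b::int) > 0 \<Longrightarrow> d > 0 \<Longrightarrow> Fract a b < Fract c d \<longleftrightarrow> a * d < c * b"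
  by (simp add: mult_less_cancel_right_pos)

lemma frac_eq: "(b::int) > 0 \<Longrightarrow> d > 0 \<Longrightarrow> Fract a b = Fract c d \<longleftrightarrow> a * d = c * b"
  by (simp add: eq_rat)

lemma int_less_nat: "(int p - int q) * (int d + 1) < (int p' - int q') * (int b + 1) \<longleftrightarrow>
   p * (d + 1) + q' * (b + 1) < p' * (b + 1) + q * (d + 1)"
proof -
  have "(int p - int q) * (int d + 1) = int (p * (d+1)) - int (q * (d+1))" by (simp add: algebra_simps)
  moreover have "(int p' - int q') * (int b + 1) = int (p' * (b+1)) - int (q' * (b+1))" by (simp add: algebra_simps)
  ultimately show ?thesis by linarith
qed

lemma int_eq_nat: "(int p - int q) * (int d + 1) = (int p' - int q') * (int b + 1) \<longleftrightarrow>
   p * (d + 1) + q' * (b + 1) = p' * (b + 1) + q * (d + 1)"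
proof -
  have "(int p - int q) * (int d + 1) = int (p * (d+1)) - int (q * (d+1))" by (simp add: algebra_simps)
  moreover have "(int p' - int q') * (int b + 1) = int (p' * (b+1)) - int (q' * (b+1))" by (simp add: algebra_simps)
  ultimately show ?thesis by linarith
qed

lemma ratlt_arith: "rat_of_code m < rat_of_code n \<longleftrightarrow>
   ip (fst (prod_decode m)) * (snd (prod_decode n) + 1) + inn (fst (prod_decode n)) * (snd (prod_decode m) + 1)
   < ip (fst (prod_decode n)) * (snd (prod_decode m) + 1) + inn (fst (prod_decode m)) * (snd (prod_decode n) + 1)"
  unfolding rat_code by (subst frac_less) (simp_all add: int_less_nat del: less_rat)

lemma rateq_arith: "rat_of_code m = rat_of_code n \<longleftrightarrow>
   ip (fst (prod_decode m)) * (snd (prod_decode n) + 1) + inn (fst (prod_decode n)) * (snd (prod_decode m) + 1)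
   = ip (fst (prod_decode n)) * (snd (prod_decode m) + 1) + inn (fst (prod_decode m)) * (snd (prod_decode n) + 1)"
  unfolding rat_code by (subst frac_eq) (simp_all add: int_eq_nat)

lemma rc_ip: "rc A n F \<Longrightarrow> rc A n (\<lambda>xs. ip (F xs))"
  by (rule rc_cong[where F="\<lambda>xs. if even (F xs) then F xs div 2 else 0"])
     (intro rc_intros rc_half rcp_even, auto simp: ip_def)

lemma rc_inn: "rc A n F \<Longrightarrow> rc A n (\<lambda>xs. inn (F xs))"
  by (rule rc_cong[where F="\<lambda>xs. if even (F xs) then 0 else F xs div 2 + 1"])
     (intro rc_intros rc_half rcp_even, auto simp: inn_def)

lemma rcp_ratlt: "rc A n F \<Longrightarrow> rc A n G \<Longrightarrow> rcp A n (\<lambda>xs. rat_of_code (F xs) < rat_of_code (G xs))"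
  unfolding ratlt_arith by (intro rc_intros rc_ip rc_inn rc_pfst rc_psnd)

lemma rcp_rateq: "rc A n F \<Longrightarrow> rc A n G \<Longrightarrow> rcp A n (\<lambda>xs. rat_of_code (F xs) = rat_of_code (G xs))"
  unfolding rateq_arith by (intro rc_intros rc_ip rc_inn rc_pfst rc_psnd)

lemma rat_of_code_surj: "\<exists>n. rat_of_code n = q"
proof (cases q)
  case (Fract a b)
  then show ?thesis
    by (intro exI[of _ "prod_encode (int_encode a, nat (b - 1))"]) (simp add: rat_of_code_def)
qed

definition idx :: "rat \<Rightarrow> nat" where "idx q = (LEAST n. rat_of_code n = q)"

lemma idx_rat[simp]: "rat_of_code (idx q) = q"
  unfolding idx_def using rat_of_code_surj by (rule LeastI_ex)

lemma idx_inj: "idx p = idx q \<Longrightarrow> p = q"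
  by (metis idx_rat)

lemma rc_idx: "rc A n F \<Longrightarrow> rc A n (\<lambda>xs. idx (rat_of_code (F xs)))"
proof -
  have "rc A 1 (\<lambda>xs. LEAST j. rat_of_code ((j # xs) ! 0) = rat_of_code ((j # xs) ! 1))"
  proof (rule rc_Least)
    show "rcp A (Suc 1) (\<lambda>xs. rat_of_code (xs ! 0) = rat_of_code (xs ! 1))"
      by (intro rcp_rateq rc_nth) auto
    show "\<exists>j. rat_of_code ((j # xs) ! 0) = rat_of_code ((j # xs) ! 1)" for xs :: "nat list"
      by (rule exI[of _ "xs ! 0"]) simp
  qed
  then have "rc A 1 (\<lambda>xs. idx (rat_of_code (xs ! 0)))"
    by (rule rc_cong) (simp add: idx_def)
  then show "rc A n F \<Longrightarrow> rc A n (\<lambda>xs. idx (rat_of_code (F xs)))" by (rule rc_lift1)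
qed

section \<open>The reduction\<close>

definition cc :: "(nat \<Rightarrow> nat \<Rightarrow> nat) \<Rightarrow> rat \<Rightarrow> rat \<Rightarrow> nat" where
  "cc f p q = (if idx p < idx q then 2 * f (idx p) (idx q) else 2 * f (idx q) (idx p) + 1)"

lemma cc_inst: "RT_inst k f \<Longrightarrow> DT_inst (2 * k) (cc f)"
  unfolding RT_inst_def DT_inst_def
proof (intro allI impI)
  fix p q :: rat
  assume f: "\<forall>x y. x < y \<longrightarrow> f x y < k" and pq: "p < q"
  then have "idx p \<noteq> idx q" using idx_inj by auto
  show "cc f p q < 2 * k"
  proof (cases "idx p < idx q")
    case True
    then have "f (idx p) (idx q) < k" using f by blast
    then show ?thesis using True unfolding cc_def by simp
  next
    case False
    then have "idx q < idx p" using \<open>idx p \<noteq> idx q\<close> by simp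
    then have "f (idx q) (idx p) < k" using f by blast
    then show ?thesis using False unfolding cc_def by simp
  qed
qed

definition fA :: "nat set \<Rightarrow> nat \<Rightarrow> nat \<Rightarrow> nat" where
  "fA A a b = (LEAST v. b \<le> a \<or> prod_encode (prod_encode (a, b), v) \<in> A)"

lemma fA_eq: "a < b \<Longrightarrow> fA (RT_code f) a b = f a b"
  unfolding fA_def RT_code_def by (rule Least_equality) auto

lemma rc_fA: "rc (RT_code f) n F \<Longrightarrow> rc (RT_code f) n G \<Longrightarrow> rc (RT_code f) n (\<lambda>xs. fA (RT_code f) (F xs) (G xs))"
proof -
  let ?A = "RT_code f"
  have "rc ?A 2 (\<lambda>xs. LEAST v. (v # xs) ! 2 \<le> (v # xs) ! 1 \<or>
           prod_encode (prod_encode ((v # xs) ! 1, (v # xs) ! 2), (v # xs) ! 0) \<in> ?A)"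
  proof (rule rc_Least)
    show "rcp ?A (Suc 2) (\<lambda>xs. xs ! 2 \<le> xs ! 1 \<or> prod_encode (prod_encode (xs ! 1, xs ! 2), xs ! 0) \<in> ?A)"
      by (intro rc_intros rc_penc) auto
    show "\<exists>v. (v # xs) ! 2 \<le> (v # xs) ! 1 \<or>
           prod_encode (prod_encode ((v # xs) ! 1, (v # xs) ! 2), (v # xs) ! 0) \<in> ?A"
      for xs :: "nat list"
      by (rule exI[of _ "f (xs ! 0) (xs ! 1)"]) (auto simp: RT_code_def)
  qed
  then have "rc ?A 2 (\<lambda>xs. fA ?A (xs ! 0) (xs ! 1))"
    by (rule rc_cong) (simp add: fA_def numeral_2_eq_2)
  then show "rc ?A n F \<Longrightarrow> rc ?A n G \<Longrightarrow> rc ?A n (\<lambda>xs. fA ?A (F xs) (G xs))"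
    by (rule rc_lift2)
qed

definition ccA :: "(nat \<Rightarrow> nat \<Rightarrow> nat) \<Rightarrow> nat \<Rightarrow> nat \<Rightarrow> nat" where
  "ccA f m n = (if idx (rat_of_code m) < idx (rat_of_code n)
     then 2 * fA (RT_code f) (idx (rat_of_code m)) (idx (rat_of_code n))
     else 2 * fA (RT_code f) (idx (rat_of_code n)) (idx (rat_of_code m)) + 1)"

lemma cc_ccA: "rat_of_code m < rat_of_code n \<Longrightarrow> cc f (rat_of_code m) (rat_of_code n) = ccA f m n"
proof -
  assume "rat_of_code m < rat_of_code n"
  then have ne: "idx (rat_of_code m) \<noteq> idx (rat_of_code n)" using idx_inj by fastforce
  show ?thesis
    unfolding cc_def ccA_def using ne by (auto simp: fA_eq)
qed

lemma dtcode_mem: "x \<in> DT_code (cc f) \<longleftrightarrow>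
   rat_of_code (fst (prod_decode (fst (prod_decode x)))) < rat_of_code (snd (prod_decode (fst (prod_decode x)))) \<and>
   snd (prod_decode x) = ccA f (fst (prod_decode (fst (prod_decode x)))) (snd (prod_decode (fst (prod_decode x))))"
  (is "_ \<longleftrightarrow> rat_of_code ?M < rat_of_code ?N \<and> ?V = _")
proof
  assume "x \<in> DT_code (cc f)"
  then obtain m n where x: "x = prod_encode (prod_encode (m, n), cc f (rat_of_code m) (rat_of_code n))"
    and mn: "rat_of_code m < rat_of_code n" unfolding DT_code_def by blast
  then show "rat_of_code ?M < rat_of_code ?N \<and> ?V = ccA f ?M ?N"
    by (simp add: cc_ccA)
next
  assume a: "rat_of_code ?M < rat_of_code ?N \<and> ?V = ccA f ?M ?N"
  have dec: "x = prod_encode (prod_encode (?M, ?N), ?V)"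
    by (metis prod.collapse prod_decode_inverse)
  have e: "cc f (rat_of_code ?M) (rat_of_code ?N) = ?V" using a cc_ccA[of ?M ?N f] by simp
  have x: "x = prod_encode (prod_encode (?M, ?N), cc f (rat_of_code ?M) (rat_of_code ?N))"
    by (subst e) (rule dec)
  show "x \<in> DT_code (cc f)"
    unfolding DT_code_def using x a by blast
qed

lemma part_code: "turing_le (DT_code (cc f)) (RT_code f)"
proof (rule turing_leI)
  show "rcp (RT_code f) 1 (\<lambda>xs. xs ! 0 \<in> DT_code (cc f))"
    unfolding dtcode_mem ccA_def
    by (intro rc_intros rcp_ratlt rc_pfst rc_psnd rc_fA rc_idx) auto
qed

section \<open>Extracting a sequence from a dense set\<close>

definition dirP :: "bool \<Rightarrow> rat \<Rightarrow> rat \<Rightarrow> bool" where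
  "dirP d p q \<longleftrightarrow> (d \<and> p < q) \<or> (\<not> d \<and> q < p)"

lemma dirP_trans: "dirP d p q \<Longrightarrow> dirP d q r \<Longrightarrow> dirP d p r"
  unfolding dirP_def by auto

lemma chain_rel:
  assumes "\<And>i. R (g i) (g (Suc i))" "\<And>a b c. R a b \<Longrightarrow> R b c \<Longrightarrow> R a c" "i < j"
  shows "R (g i) (g j)"
  using assms(3)
proof (induction j)
  case 0 then show ?case by simp
next
  case (Suc j)
  then show ?case using assms(1,2) by (metis less_Suc_eq)
qed

lemma key_ext:
  fixes S :: "rat set"
  assumes lo: "\<forall>x\<in>S. \<exists>y\<in>S. y < x" and hi: "\<forall>x\<in>S. \<exists>y\<in>S. x < y" and q0: "q0 \<in> S"
  shows "\<exists>n. rat_of_code n \<in> S \<and> r < n \<and> idx (rat_of_code n) = n \<and> dirP d q0 (rat_of_code n)"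
proof -
  define T where "T = {q \<in> S. dirP d q0 q}"
  have Tne: "T \<noteq> {}"
    using lo hi q0 unfolding T_def dirP_def by (cases d) auto
  have Tinf: "infinite T"
  proof
    assume fin: "finite T"
    show False
    proof (cases d)
      case True
      have M: "Max T \<in> T" using Max_in[OF fin Tne] .
      then obtain y where y: "y \<in> S" "Max T < y" using hi unfolding T_def by auto
      have "y \<in> T" using M y True unfolding T_def dirP_def by auto
      then have "y \<le> Max T" using fin by simp
      then show False using y by simp
    next
      case False
      have M: "Min T \<in> T" using Min_in[OF fin Tne] .
      then obtain y where y: "y \<in> S" "y < Min T" using lo unfolding T_def by auto
      have "y \<in> T" using M y False unfolding T_def dirP_def by auto
      then have "Min T \<le> y" using fin by simp
      then show False using y by simp
    qed
  qed
  have "inj_on idx T" unfolding inj_on_def using idx_inj by blast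
  then have "infinite (idx ` T)" using Tinf finite_imageD by blast
  then obtain m where m: "m > r" "m \<in> idx ` T" using infinite_nat_iff_unbounded by blast
  then obtain q where q: "q \<in> T" "m = idx q" by blast
  show ?thesis
    by (rule exI[of _ m]) (use q m in \<open>auto simp: T_def\<close>)
qed

definition stepf :: "rat set \<Rightarrow> bool \<Rightarrow> nat \<Rightarrow> nat" where
  "stepf S d r = (LEAST n. rat_of_code r \<notin> S \<or>
      (rat_of_code n \<in> S \<and> r < n \<and> idx (rat_of_code n) = n \<and> dirP d (rat_of_code r) (rat_of_code n)))"

lemma seq_exists:
  fixes S :: "rat set" and d :: bool and B :: "nat set"
  assumes ne: "S \<noteq> {}" and lo: "\<forall>x\<in>S. \<exists>y\<in>S. y < x" and hi: "\<forall>x\<in>S. \<exists>y\<in>S. x < y"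
    and memS: "\<And>n F. rc B n F \<Longrightarrow> rcp B n (\<lambda>xs. rat_of_code (F xs) \<in> S)"
  shows "\<exists>sq :: nat \<Rightarrow> nat. strict_mono sq \<and> (\<forall>i. rat_of_code (sq i) \<in> S \<and> idx (rat_of_code (sq i)) = sq i) \<and>
     (\<forall>i j. i < j \<longrightarrow> dirP d (rat_of_code (sq i)) (rat_of_code (sq j))) \<and> turing_le (range sq) B"
proof -
  obtain s0 where s0: "s0 \<in> S" using ne by blast
  define sq where "sq i = rec_nat (idx s0) (\<lambda>j r. stepf S d r) i" for i
  have sq0: "sq 0 = idx s0" and sqS: "sq (Suc i) = stepf S d (sq i)" for i by (simp_all add: sq_def)
  have stepP: "rat_of_code (stepf S d r) \<in> S \<and> r < stepf S d r \<and> idx (rat_of_code (stepf S d r)) = stepf S d r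
      \<and> dirP d (rat_of_code r) (rat_of_code (stepf S d r))" if "rat_of_code r \<in> S" for r
  proof -
    have "\<exists>n. rat_of_code r \<notin> S \<or>
      (rat_of_code n \<in> S \<and> r < n \<and> idx (rat_of_code n) = n \<and> dirP d (rat_of_code r) (rat_of_code n))"
      using key_ext[OF lo hi that, of r d] by blast
    from LeastI_ex[OF this] that show ?thesis unfolding stepf_def by blast
  qed
  have inv: "rat_of_code (sq i) \<in> S \<and> idx (rat_of_code (sq i)) = sq i" for i
  proof (induction i)
    case 0 then show ?case using s0 by (simp add: sq0)
  next
    case (Suc i) then show ?case using stepP[of "sq i"] by (simp add: sqS)
  qed
  have stepi: "sq i < sq (Suc i) \<and> dirP d (rat_of_code (sq i)) (rat_of_code (sq (Suc i)))" for i
    using stepP[of "sq i"] inv[of i] unfolding sqS by blast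
  have sm: "strict_mono sq"
    unfolding strict_mono_Suc_iff using stepi by blast
  have dir: "\<forall>i j. i < j \<longrightarrow> dirP d (rat_of_code (sq i)) (rat_of_code (sq j))"
  proof (intro allI impI)
    fix i j :: nat assume "i < j"
    show "dirP d (rat_of_code (sq i)) (rat_of_code (sq j))"
      apply (rule chain_rel[where g="\<lambda>i. rat_of_code (sq i)" and R="dirP d"])
      using stepi apply blast
       apply (erule (1) dirP_trans)
      by (rule \<open>i < j\<close>)
  qed
  have rc_step: "rc B n F \<Longrightarrow> rc B n (\<lambda>xs. stepf S d (F xs))" for n F
  proof -
    have "rc B 1 (\<lambda>xs. LEAST n. \<not> rat_of_code ((n # xs) ! 1) \<in> S \<or>
      (rat_of_code ((n # xs) ! 0) \<in> S \<and> (n # xs) ! 1 < (n # xs) ! 0 \<and>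
       idx (rat_of_code ((n # xs) ! 0)) = (n # xs) ! 0 \<and>
       ((d \<and> rat_of_code ((n # xs) ! 1) < rat_of_code ((n # xs) ! 0)) \<or>
        (\<not> d \<and> rat_of_code ((n # xs) ! 0) < rat_of_code ((n # xs) ! 1)))))"
    proof (rule rc_Least)
      show "rcp B (Suc 1) (\<lambda>xs. \<not> rat_of_code (xs ! 1) \<in> S \<or>
      (rat_of_code (xs ! 0) \<in> S \<and> xs ! 1 < xs ! 0 \<and>
       idx (rat_of_code (xs ! 0)) = xs ! 0 \<and>
       ((d \<and> rat_of_code (xs ! 1) < rat_of_code (xs ! 0)) \<or>
        (\<not> d \<and> rat_of_code (xs ! 0) < rat_of_code (xs ! 1)))))"
        by (intro memS rc_intros rcp_ratlt rc_idx rcp_const) auto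
      show "\<exists>n. \<not> rat_of_code ((n # xs) ! 1) \<in> S \<or>
      (rat_of_code ((n # xs) ! 0) \<in> S \<and> (n # xs) ! 1 < (n # xs) ! 0 \<and>
       idx (rat_of_code ((n # xs) ! 0)) = (n # xs) ! 0 \<and>
       ((d \<and> rat_of_code ((n # xs) ! 1) < rat_of_code ((n # xs) ! 0)) \<or>
        (\<not> d \<and> rat_of_code ((n # xs) ! 0) < rat_of_code ((n # xs) ! 1))))" for xs :: "nat list"
      proof (cases "rat_of_code (xs ! 0) \<in> S")
        case True
        from key_ext[OF lo hi True, of "xs ! 0" d] obtain n where
          "rat_of_code n \<in> S \<and> xs ! 0 < n \<and> idx (rat_of_code n) = n \<and> dirP d (rat_of_code (xs ! 0)) (rat_of_code n)" by blast
        then show ?thesis unfolding dirP_def by (intro exI[where x=n]) auto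
      next
        case False
        then show ?thesis by simp
      qed
    qed
    then have "rc B 1 (\<lambda>xs. stepf S d (xs ! 0))"
      by (rule rc_cong) (unfold stepf_def dirP_def, simp only: nth_Cons_0 One_nat_def nth_Cons_Suc)
    then show "rc B n F \<Longrightarrow> rc B n (\<lambda>xs. stepf S d (F xs))" by (rule rc_lift1)
  qed
  have rc_sq: "rc B n F \<Longrightarrow> rc B n (\<lambda>xs. sq (F xs))" for n F
  proof -
    have "rc B 2 (\<lambda>xs. stepf S d (xs ! 1))" by (intro rc_step rc_nth) simp
    then have "rc B 1 (\<lambda>xs. rec_nat (idx s0) (\<lambda>j r. stepf S d r) (xs ! 0))"
      using rc_prim0[of B "\<lambda>j r. stepf S d r" "idx s0"] by simp
    then have "rc B 1 (\<lambda>xs. sq (xs ! 0))" by (rule rc_cong) (simp add: sq_def)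
    then show "rc B n F \<Longrightarrow> rc B n (\<lambda>xs. sq (F xs))" by (rule rc_lift1)
  qed
  have incr: "i \<le> sq i" for i using sm by (rule strict_mono_imp_increasing)
  have memH: "x \<in> range sq \<longleftrightarrow> sq (LEAST i. x \<le> sq i) = x" for x
  proof
    assume "x \<in> range sq"
    then obtain j where j: "x = sq j" by blast
    define i0 where "i0 = (LEAST i. x \<le> sq i)"
    have le: "i0 \<le> j" unfolding i0_def using j by (simp add: Least_le)
    have xle: "x \<le> sq i0" unfolding i0_def by (rule LeastI[of _ j]) (simp add: j)
    have "i0 = j"
    proof (rule ccontr)
      assume "i0 \<noteq> j"
      then have "i0 < j" using le by simp
      then have "sq i0 < sq j" using sm by (simp add: strict_mono_less)
      then show False using xle j by simp
    qed
    then show "sq (LEAST i. x \<le> sq i) = x" using j i0_def by simp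
  next
    assume "sq (LEAST i. x \<le> sq i) = x"
    then show "x \<in> range sq" by (metis rangeI)
  qed
  have T: "turing_le (range sq) B"
  proof (rule turing_leI)
    have L: "rc B 1 (\<lambda>xs. LEAST i. (i # xs) ! 1 \<le> sq ((i # xs) ! 0))"
    proof (rule rc_Least)
      show "rcp B (Suc 1) (\<lambda>xs. xs ! 1 \<le> sq (xs ! 0))"
        by (intro rc_intros rc_sq) auto
      show "\<exists>i. (i # xs) ! 1 \<le> sq ((i # xs) ! 0)" for xs :: "nat list"
        by (rule exI[of _ "xs ! 0"]) (simp add: incr)
    qed
    have "rcp B 1 (\<lambda>xs. sq (LEAST i. (i # xs) ! 1 \<le> sq ((i # xs) ! 0)) = xs ! 0)"
      by (intro rcp_eq rc_sq L rc_nth) simp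
    then show "rcp B 1 (\<lambda>xs. xs ! 0 \<in> range sq)"
      by (rule rcp_cong) (simp add: memH)
  qed
  have Hfin: "strict_mono sq \<and> (\<forall>i. rat_of_code (sq i) \<in> S \<and> idx (rat_of_code (sq i)) = sq i) \<and>
     (\<forall>i j. i < j \<longrightarrow> dirP d (rat_of_code (sq i)) (rat_of_code (sq j))) \<and> turing_le (range sq) B"
    using sm inv dir T by simp
  show ?thesis by (rule exI[where x=sq], rule Hfin)
qed

lemma join_odd: "Suc (2 * n) \<in> join X Y \<longleftrightarrow> n \<in> Y"
  unfolding join_def by auto presburger

lemma part_sol:
  assumes sol: "DT_sol (2 * l + 1) (cc f) S"
  shows "\<exists>H. RT_sol l f H \<and> turing_le H (join (RT_code f) (DT_sol_code S))"
proof -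
  let ?B = "join (RT_code f) (DT_sol_code S)"
  from sol have ne: "S \<noteq> {}" and lo: "\<forall>x\<in>S. \<exists>y\<in>S. y < x" and hi: "\<forall>x\<in>S. \<exists>y\<in>S. x < y"
    and finC: "finite {cc f x y | x y. x \<in> S \<and> y \<in> S \<and> x < y}"
    and cardC: "card {cc f x y | x y. x \<in> S \<and> y \<in> S \<and> x < y} \<le> 2 * l + 1"
    unfolding DT_sol_def by auto
  define C where "C = {cc f x y | x y. x \<in> S \<and> y \<in> S \<and> x < y}"
  define E where "E = {cc f x y | x y. x \<in> S \<and> y \<in> S \<and> x < y \<and> idx x < idx y}"
  define Od where "Od = {cc f x y | x y. x \<in> S \<and> y \<in> S \<and> x < y \<and> idx y < idx x}"
  have EC: "E \<subseteq> C" and OdC: "Od \<subseteq> C" unfolding E_def Od_def C_def by blast+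
  have finE: "finite E" and finO: "finite Od" using EC OdC finC finite_subset unfolding C_def by blast+
  have Eev: "e \<in> E \<Longrightarrow> even e" for e unfolding E_def cc_def by auto
  have Oodd: "e \<in> Od \<Longrightarrow> odd e" for e unfolding Od_def cc_def by auto
  have disj: "E \<inter> Od = {}" using Eev Oodd by blast
  have "card E + card Od = card (E \<union> Od)" using card_Un_disjoint[OF finE finO disj] by simp
  also have "\<dots> \<le> card C" using EC OdC finC unfolding C_def by (intro card_mono) auto
  finally have "card E + card Od \<le> 2 * l + 1" using cardC unfolding C_def by simp
  then have "card E \<le> l \<or> card Od \<le> l" by linarith
  then obtain d where dD: "card (if d then E else Od) \<le> l" by (metis (full_types))
  have memS: "rc ?B n F \<Longrightarrow> rcp ?B n (\<lambda>xs. rat_of_code (F xs) \<in> S)" for n F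
    by (rule rcp_cong[where P="\<lambda>xs. 2 * F xs + 1 \<in> ?B"]) (intro rc_intros, auto simp: join_odd DT_sol_code_def)
  obtain sq :: "nat \<Rightarrow> nat" where sm: "strict_mono sq"
    and inv: "\<forall>i. rat_of_code (sq i) \<in> S \<and> idx (rat_of_code (sq i)) = sq i"
    and dir: "\<forall>i j. i < j \<longrightarrow> dirP d (rat_of_code (sq i)) (rat_of_code (sq j))"
    and T: "turing_le (range sq) ?B"
    using seq_exists[OF ne lo hi memS, of d] by blast
  define D where "D = (if d then E else Od)"
  have finD: "finite D" unfolding D_def using finE finO by simp
  have sub: "{f x y | x y. x \<in> range sq \<and> y \<in> range sq \<and> x < y} \<subseteq> (\<lambda>e. e div 2) ` D"
  proof
    fix z assume "z \<in> {f x y | x y. x \<in> range sq \<and> y \<in> range sq \<and> x < y}"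
    then obtain i j where z: "z = f (sq i) (sq j)" and lt: "sq i < sq j" by blast
    have ij: "i < j" using lt sm by (metis strict_mono_less)
    define p where "p = rat_of_code (sq i)"
    define q where "q = rat_of_code (sq j)"
    have pS: "p \<in> S" and qS: "q \<in> S" and ip: "idx p = sq i" and iq: "idx q = sq j"
      using inv unfolding p_def q_def by auto
    have dpq: "dirP d p q" using dir ij unfolding p_def q_def by blast
    show "z \<in> (\<lambda>e. e div 2) ` D"
    proof (cases d)
      case True
      then have "p < q" using dpq unfolding dirP_def by simp
      moreover have "idx p < idx q" using ip iq lt by simp
      ultimately have "cc f p q \<in> E" unfolding E_def using pS qS by blast
      moreover have "cc f p q = 2 * z" unfolding cc_def using ip iq lt z by simp
      ultimately show ?thesis unfolding D_def using True by (auto intro!: image_eqI[where x="2 * z"])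
    next
      case False
      then have "q < p" using dpq unfolding dirP_def by simp
      moreover have "idx p < idx q" using ip iq lt by simp
      ultimately have "cc f q p \<in> Od" unfolding Od_def using pS qS by blast
      moreover have "cc f q p = 2 * z + 1" unfolding cc_def using ip iq lt z by simp
      ultimately show ?thesis unfolding D_def using False by (auto intro!: image_eqI[where x="2 * z + 1"])
    qed
  qed
  have finK: "finite {f x y | x y. x \<in> range sq \<and> y \<in> range sq \<and> x < y}"
    using sub finD finite_subset by blast
  have "card {f x y | x y. x \<in> range sq \<and> y \<in> range sq \<and> x < y} \<le> card ((\<lambda>e. e div 2) ` D)"
    using sub finD by (intro card_mono) auto
  also have "\<dots> \<le> card D" using finD by (rule card_image_le)
  also have "\<dots> \<le> l" using dD unfolding D_def .
  finally have cardK: "card {f x y | x y. x \<in> range sq \<and> y \<in> range sq \<and> x < y} \<le> l" .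
  have "inj sq" using sm by (simp add: inj_on_def strict_mono_eq)
  then have "infinite (range sq)" by (rule range_inj_infinite)
  then have "RT_sol l f (range sq)" unfolding RT_sol_def using finK cardK by blast
  then show ?thesis using T by blast
qed


theorem theorem5p28:
  fixes k l :: nat
  assumes "k \<ge> 1" and "l \<ge> 1"
  shows "comp_reducible (RT_inst k) (RT_sol l) RT_code id
           (DT_inst (2 * k)) (DT_sol (2 * l + 1)) DT_code DT_sol_code"
  unfolding comp_reducible_def
proof (intro allI impI)
  fix f assume f: "RT_inst k f"
  show "\<exists>Xh. DT_inst (2 * k) Xh \<and> turing_le (DT_code Xh) (RT_code f) \<and>
          (\<forall>Yh. DT_sol (2 * l + 1) Xh Yh \<longrightarrow>
             (\<exists>Y. RT_sol l f Y \<and> turing_le (id Y) (join (RT_code f) (DT_sol_code Yh))))"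
  proof (rule exI[where x="cc f"], intro conjI allI impI)
    show "DT_inst (2 * k) (cc f)" using f by (rule cc_inst)
    show "turing_le (DT_code (cc f)) (RT_code f)" by (rule part_code)
    fix S assume "DT_sol (2 * l + 1) (cc f) S"
    then show "\<exists>Y. RT_sol l f Y \<and> turing_le (id Y) (join (RT_code f) (DT_sol_code S))"
      using part_sol by simp
  qed
qed

end
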